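(* Under the Setting, Algorithm and Strong convexity assumption described in the context, if $\{x_k\}_{k\ge1}$ is generated by the inexact CSA algorithm with policy (P2), then $\mathcal B\neq\emptyset$, so that $\bar x_{N,s}=\sum_{k\in\mathcal B}\rho_kx_k/\sum_{k\in\mathcal B}\rho_k$ is well defined.
   Context: Setting. $\mathcal X\subset\mathbb R^n$ is convex and compact; $f:\mathcal X\to\mathbb R$ is convex and $L_f$-Lipschitz; $\Delta\subset\mathbb R^d$ is compact; $g:\mathcal X\times\Delta\to\mathbb R$ is such that for every $\delta\in\Delta$, $x\mapsto g(x,\delta)$ is convex and $L_{g,\mathcal X}$-Lipschitz, and for every $x\in\mathcal X$, $\delta\mapsto g(x,\delta)$ is $L_{g,\Delta}$-Lipschitz. Let $G(x):=\max_{\delta\in\Delta}g(x,\delta)$ and assume the problem $\min_{x\in\mathcal X}\{f(x):G(x)\le0\}$ has an optimal solution $x^*$. Norms are Euclidean. $f'(x)$ denotes a subgradient of $f$ at $x$ and $g'(x,\delta)$ a subgradient of $g(\cdot,\delta)$ at $x$. Let $\omega_{\mathcal X}:\mathcal X\to\mathbb R$ be continuously differentiable and $1$-strongly convex; $V(x,z):=\omega_{\mathcal X}(z)-\omega_{\mathcal X}(x)-\langle\nabla\omega_{\mathcal X}(x),z-x\rangle$; prox-mapping $P_{x,\mathcal X}(y):=\arg\min_{z\in\mathcal X}\{\langle y,z\rangle+V(x,z)\}$; $D_{\mathcal X}:=\sqrt{\max_{x,z\in\mathcal X}V(x,z)}$. Algorithm (inexact CSA). Inputs: $N\ge1$, $x_1\in\mathcal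 X$, tolerances $\eta_k>0$, step-sizes $\gamma_k>0$. For $k=1,\dots,N$: choose some $\delta_k\in\Delta$ (an approximate maximizer of $g(x_k,\cdot)$); set $h_k=f'(x_k)$ if $g(x_k,\delta_k)\le\eta_k$ and $h_k=g'(x_k,\delta_k)$ otherwise; set $x_{k+1}=P_{x_k,\mathcal X}(\gamma_kh_k)$. For $1\le s\le N$ let $I=\{s,\dots,N\}$, $\mathcal B:=\{k\in I: g(x_k,\delta_k)\le\eta_k\}$, $\mathcal N:=I\setminus\mathcal B$. Strong convexity assumption: $f$ is strongly convex with parameter $\mu_f>0$ (i.e. $f(x)\ge f(z)+\langle f'(z),x-z\rangle+\frac{\mu_f}{2}\|x-z\|^2$), each $g(\cdot,\delta)$ is strongly convex with parameter $\mu_g>0$ uniformly in $\delta$, and there is $L>0$ with $V(x,z)\le\frac L2\|x-z\|^2$ for all $x,z\in\mathcal X$. Define $a_k=\mu_f\gamma_k/L$ if $g(x_k,\delta_k)\le\eta_k$ and $a_k=\mu_g\gamma_k/L$ otherwise; $A_1=1$, $A_k=(1-a_k)A_{k-1}$ for $k\ge2$; $\rho_k=\gamma_k/A_k$. Policy (P2): for $k=1,\dots,N$, $\eta_k=\frac{8L}{N}\max\{\mu_f,\mu_g\}\max\{\frac{L_f^2}{\mu_f^2},\frac{L_{g,\mathcal X}^2}{\mu_g^2}\}$, $\gamma_k=\frac{2L}{\mu_f(k+1)}$ if $g(x_k,\delta_k)\le\eta_k$ and $\gamma_k=\frac{2L}{\mu_g(k+1)}$ otherwise, and $s=1$. *)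

theory Defs
  imports "HOL-Analysis.Analysis"
begin

definition is_subgrad_on :: "'a::real_inner set \<Rightarrow> ('a \<Rightarrow> real) \<Rightarrow> 'a \<Rightarrow> 'a \<Rightarrow> bool" where
  "is_subgrad_on S h x s \<longleftrightarrow> (\<forall>y\<in>S. h y \<ge> h x + inner s (y - x))"

definition strongly_convex_with :: "'a::real_normed_vector set \<Rightarrow> real \<Rightarrow> ('a \<Rightarrow> real) \<Rightarrow> bool" where
  "strongly_convex_with S mu h \<longleftrightarrow>
     (\<forall>x\<in>S. \<forall>y\<in>S. \<forall>t::real. 0 \<le> t \<longrightarrow> t \<le> 1 \<longrightarrow>
        h ((1 - t) *\<^sub>R x + t *\<^sub>R y) \<le> (1 - t) * h x + t * h y - mu / 2 * t * (1 - t) * (norm (x - y))\<^sup>2)"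

definition bregman :: "('a::real_inner \<Rightarrow> real) \<Rightarrow> ('a \<Rightarrow> 'a) \<Rightarrow> 'a \<Rightarrow> 'a \<Rightarrow> real" where
  "bregman \<omega> d\<omega> x z = \<omega> z - \<omega> x - inner (d\<omega> x) (z - x)"

definition is_prox :: "'a::real_inner set \<Rightarrow> ('a \<Rightarrow> real) \<Rightarrow> ('a \<Rightarrow> 'a) \<Rightarrow> 'a \<Rightarrow> 'a \<Rightarrow> 'a \<Rightarrow> bool" where
  "is_prox X \<omega> d\<omega> x y z \<longleftrightarrow>
     z \<in> X \<and> (\<forall>u\<in>X. inner y z + bregman \<omega> d\<omega> x z \<le> inner y u + bregman \<omega> d\<omega> x u)"

definition Gmax :: "('a \<Rightarrow> 'b \<Rightarrow> real) \<Rightarrow> 'b set \<Rightarrow> 'a \<Rightarrow> real" where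
  "Gmax g \<Delta> x = (SUP \<delta>\<in>\<Delta>. g x \<delta>)"

end

theory Submission
  imports Defs
begin

lemma dir_deriv:
  fixes \<omega> :: "'a::real_inner \<Rightarrow> real"
  assumes d: "(\<omega> has_derivative (\<lambda>v. inner D v)) (at z within X)"
    and X: "convex X" and z: "z \<in> X" and u: "u \<in> X"
  shows "((\<lambda>t. \<omega> (z + t *\<^sub>R (u - z))) has_real_derivative inner D (u - z)) (at 0 within {0..1})"
proof -
  have p: "((\<lambda>t. z + t *\<^sub>R (u - z)) has_derivative (\<lambda>t. t *\<^sub>R (u - z))) (at 0 within {0..1})"
    by (auto intro!: derivative_eq_intros)
  have img: "(\<lambda>t. z + t *\<^sub>R (u - z)) ` {0..1} \<subseteq> X"
  proof
    fix w assume "w \<in> (\<lambda>t. z + t *\<^sub>R (u - z)) ` {0..1}"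
    then obtain t where t: "0 \<le> t" "t \<le> 1" "w = z + t *\<^sub>R (u - z)" by auto
    have "w = (1 - t) *\<^sub>R z + t *\<^sub>R u" using t by (simp add: algebra_simps)
    then show "w \<in> X" using convexD[OF X z u, of "1-t" t] t by simp
  qed
  have d2: "(\<omega> has_derivative (\<lambda>v. inner D v)) (at ((\<lambda>t. z + t *\<^sub>R (u - z)) 0) within (\<lambda>t. z + t *\<^sub>R (u - z)) ` {0..1})"
    using has_derivative_subset[OF d img] by simp
  have "((\<lambda>t. \<omega> (z + t *\<^sub>R (u - z))) has_derivative (\<lambda>t. inner D (t *\<^sub>R (u - z)))) (at 0 within {0..1})"
    using has_derivative_in_compose[OF p d2] by simp
  moreover have "(\<lambda>t. inner D (t *\<^sub>R (u - z))) = (*) (inner D (u - z))"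
    by (auto simp: inner_scaleR_right)
  ultimately show ?thesis unfolding has_field_derivative_def by simp
qed

lemma deriv_lower:
  fixes p :: "real \<Rightarrow> real"
  assumes d: "(p has_real_derivative D) (at 0 within {0..1})"
    and h: "\<And>t. 0 < t \<Longrightarrow> t \<le> 1 \<Longrightarrow> p t - p 0 \<ge> t * c"
  shows "c \<le> D"
proof -
  have lim: "((\<lambda>y. (p y - p 0) / (y - 0)) \<longlongrightarrow> D) (at_right 0)"
    using d unfolding has_field_derivative_iff at_within_Icc_at_right[of "0::real" 1, simplified] .
  show ?thesis
  proof (rule tendsto_lowerbound[OF lim])
    show "\<forall>\<^sub>F i in at_right 0. c \<le> (p i - p 0) / (i - 0)"
      unfolding eventually_at_right[OF zero_less_one]
      using h by (auto intro!: exI[of _ 1] simp: pos_le_divide_eq mult.commute)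
  qed simp
qed

lemma deriv_upper:
  fixes p :: "real \<Rightarrow> real"
  assumes d: "(p has_real_derivative D) (at 0 within {0..1})"
    and h: "\<And>t. 0 < t \<Longrightarrow> t \<le> 1 \<Longrightarrow> p t - p 0 \<le> t * c + t * t * e"
  shows "D \<le> c"
proof -
  have lim: "((\<lambda>y. (p y - p 0) / (y - 0)) \<longlongrightarrow> D) (at_right 0)"
    using d unfolding has_field_derivative_iff at_within_Icc_at_right[of "0::real" 1, simplified] .
  have lim2: "((\<lambda>t. c + t * e) \<longlongrightarrow> c) (at_right 0)"
  proof -
    have "((\<lambda>t. c + t * e) \<longlongrightarrow> c + 0 * e) (at_right 0)"
      by (intro tendsto_intros)
    then show ?thesis by simp
  qed
  show ?thesis
  proof (rule tendsto_le[OF _ lim2 lim])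
    show "\<forall>\<^sub>F i in at_right 0. (p i - p 0) / (i - 0) \<le> c + i * e"
      unfolding eventually_at_right[OF zero_less_one]
    proof (intro exI[of _ 1] conjI allI impI)
      fix t :: real assume "0 < t" "t < 1"
      then have "p t - p 0 \<le> t * (c + t * e)" using h[of t] by (simp add: algebra_simps)
      then show "(p t - p 0) / (t - 0) \<le> c + t * e" using \<open>0<t\<close> by (simp add: divide_le_eq mult.commute)
    qed simp
  qed simp
qed

lemma breg_lb:
  fixes \<omega> :: "'a::real_inner \<Rightarrow> real"
  assumes d: "(\<omega> has_derivative (\<lambda>v. inner (d\<omega> x) v)) (at x within X)"
    and X: "convex X" and x: "x \<in> X" and z: "z \<in> X"
    and sc: "strongly_convex_with X 1 \<omega>"
  shows "(norm (z - x))\<^sup>2 / 2 \<le> bregman \<omega> d\<omega> x z"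
proof -
  let ?d = "(norm (x - z))\<^sup>2"
  have "inner (d\<omega> x) (z - x) \<le> \<omega> z - \<omega> x - ?d / 2"
  proof (rule deriv_upper[OF dir_deriv[OF d X x z]])
    fix t :: real assume t: "0 < t" "t \<le> 1"
    have "x + t *\<^sub>R (z - x) = (1 - t) *\<^sub>R x + t *\<^sub>R z" by (simp add: algebra_simps)
    moreover have "\<omega> ((1 - t) *\<^sub>R x + t *\<^sub>R z) \<le> (1 - t) * \<omega> x + t * \<omega> z - 1 / 2 * t * (1 - t) * ?d"
      using sc x z t unfolding strongly_convex_with_def by auto
    ultimately have le: "\<omega> (x + t *\<^sub>R (z - x)) \<le> (1 - t) * \<omega> x + t * \<omega> z - 1 / 2 * t * (1 - t) * ?d" by simp
    define P where "P = \<omega> (x + t *\<^sub>R (z - x))"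
    have le2: "P \<le> (1 - t) * \<omega> x + t * \<omega> z - 1 / 2 * t * (1 - t) * ?d" using le P_def by simp
    have "P - \<omega> x \<le> t * (\<omega> z - \<omega> x - ?d / 2) + t * t * (?d / 2)"
      using le2 by (simp add: field_simps)
    then show "\<omega> (x + t *\<^sub>R (z - x)) - \<omega> (x + 0 *\<^sub>R (z - x)) \<le> t * (\<omega> z - \<omega> x - ?d / 2) + t * t * (?d / 2)"
      by (simp add: P_def)
  qed
  moreover have "norm (z - x) = norm (x - z)" by (rule norm_minus_commute)
  ultimately show ?thesis unfolding bregman_def by simp
qed

lemma prox_opt:
  fixes \<omega> :: "'a::real_inner \<Rightarrow> real"
  assumes d: "(\<omega> has_derivative (\<lambda>v. inner (d\<omega> z) v)) (at z within X)"
    and X: "convex X" and u: "u \<in> X"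
    and p: "is_prox X \<omega> d\<omega> x y z"
  shows "inner (d\<omega> x - y) (u - z) \<le> inner (d\<omega> z) (u - z)"
proof -
  have z: "z \<in> X" using p unfolding is_prox_def by auto
  show ?thesis
  proof (rule deriv_lower[OF dir_deriv[OF d X z u]])
    fix t :: real assume t: "0 < t" "t \<le> 1"
    have "z + t *\<^sub>R (u - z) = (1 - t) *\<^sub>R z + t *\<^sub>R u" by (simp add: algebra_simps)
    then have vX: "z + t *\<^sub>R (u - z) \<in> X" using convexD[OF X z u, of "1-t" t] t by simp
    have "inner y z + bregman \<omega> d\<omega> x z \<le> inner y (z + t *\<^sub>R (u - z)) + bregman \<omega> d\<omega> x (z + t *\<^sub>R (u - z))"
      using p vX unfolding is_prox_def by auto
    then show "t * inner (d\<omega> x - y) (u - z) \<le> \<omega> (z + t *\<^sub>R (u - z)) - \<omega> (z + 0 *\<^sub>R (u - z))"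
      unfolding bregman_def by (simp add: algebra_simps inner_diff_left inner_diff_right inner_add_right)
  qed
qed

lemma prox_step:
  fixes \<omega> :: "'a::real_inner \<Rightarrow> real"
  assumes dx: "(\<omega> has_derivative (\<lambda>v. inner (d\<omega> x) v)) (at x within X)"
    and dz: "(\<omega> has_derivative (\<lambda>v. inner (d\<omega> z) v)) (at z within X)"
    and X: "convex X" and u: "u \<in> X" and x: "x \<in> X"
    and sc: "strongly_convex_with X 1 \<omega>"
    and p: "is_prox X \<omega> d\<omega> x y z"
  shows "inner y (x - u) \<le> bregman \<omega> d\<omega> x u - bregman \<omega> d\<omega> z u + (norm y)\<^sup>2 / 2"
proof -
  have z: "z \<in> X" using p unfolding is_prox_def by auto
  have o: "inner (d\<omega> x - y) (u - z) \<le> inner (d\<omega> z) (u - z)" by (rule prox_opt[OF dz X u p])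
  have id: "inner (d\<omega> z - d\<omega> x) (u - z) = bregman \<omega> d\<omega> x u - bregman \<omega> d\<omega> x z - bregman \<omega> d\<omega> z u"
    unfolding bregman_def by (simp add: algebra_simps inner_diff_left inner_diff_right)
  have lb: "(norm (z - x))\<^sup>2 / 2 \<le> bregman \<omega> d\<omega> x z" by (rule breg_lb[of \<omega> d\<omega> x X z, OF dx X x z sc])
  have cs: "inner y (x - z) \<le> norm y * norm (z - x)"
    using norm_cauchy_schwarz[of y "x - z"] norm_minus_commute[of x z] by simp
  have amgm: "norm y * norm (z - x) \<le> (norm y)\<^sup>2 / 2 + (norm (z - x))\<^sup>2 / 2"
    using sum_squares_bound[of "norm y" "norm (z - x)"] by (simp add: power2_eq_square)
  have "inner y (z - u) \<le> inner (d\<omega> z - d\<omega> x) (u - z)"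
    using o by (simp add: inner_diff_left inner_diff_right algebra_simps)
  moreover have "inner y (x - u) = inner y (x - z) + inner y (z - u)" by (simp add: inner_diff_right)
  ultimately show ?thesis using id lb cs amgm by linarith
qed

lemma arith_step:
  fixes r L \<mu> \<gamma> \<eta> Vk Vk1 G :: real
  assumes r: "r \<ge> 1" and L: "L > 0" and mu: "\<mu> > 0" and G: "G \<ge> 0"
    and g: "\<gamma> = 2 * L / (\<mu> * (r + 1))"
    and E: "\<gamma> * \<eta> + \<gamma> * (\<mu> / L) * Vk < Vk - Vk1 + \<gamma>\<^sup>2 * G / 2"
  shows "\<eta> * L / \<mu> * r + r * (r + 1) / 2 * Vk1 - (r - 1) * r / 2 * Vk < L\<^sup>2 * G / \<mu>\<^sup>2"
proof -
  define W where "W = r * (r + 1) / 2"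
  have r1: "r + 1 \<noteq> 0" "\<mu> * (r + 1) \<noteq> 0" using r mu by auto
  have W: "W > 0" using r by (simp add: W_def)
  have "W * (\<gamma> * \<eta> + \<gamma> * (\<mu> / L) * Vk) < W * (Vk - Vk1 + \<gamma>\<^sup>2 * G / 2)"
    using E W by simp
  moreover have Wg: "W * \<gamma> = r * L / \<mu>" using r1 mu by (simp add: W_def g field_simps)
  moreover have "W * \<gamma>\<^sup>2 * G / 2 = r / (r + 1) * (L\<^sup>2 * G / \<mu>\<^sup>2)"
  proof -
    have "W * \<gamma>\<^sup>2 * G / 2 = (W * \<gamma>) * \<gamma> * G / 2" by (simp add: power2_eq_square)
    also have "\<dots> = r * L / \<mu> * (2 * L / (\<mu> * (r + 1))) * G / 2" unfolding Wg by (simp add: g)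
    also have "\<dots> = r / (r + 1) * (L\<^sup>2 * G / \<mu>\<^sup>2)" using r mu by (simp add: divide_simps power2_eq_square)
    finally show ?thesis .
  qed
  moreover have "r / (r + 1) * (L\<^sup>2 * G / \<mu>\<^sup>2) \<le> L\<^sup>2 * G / \<mu>\<^sup>2"
    using r G mu by (intro mult_left_le_one_le) (auto simp: field_simps)
  moreover have "W * (\<gamma> * \<eta> + \<gamma> * (\<mu> / L) * Vk) = \<eta> * L / \<mu> * r + r * Vk"
  proof -
    have "W * (\<gamma> * \<eta> + \<gamma> * (\<mu> / L) * Vk) = (W * \<gamma>) * \<eta> + (W * \<gamma>) * (\<mu> / L) * Vk"
      by (simp add: algebra_simps)
    also have "\<dots> = \<eta> * L / \<mu> * r + r * Vk" unfolding Wg using L mu by (simp add: field_simps)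
    finally show ?thesis .
  qed
  moreover have "W * (Vk - Vk1 + \<gamma>\<^sup>2 * G / 2) = W * Vk - W * Vk1 + W * \<gamma>\<^sup>2 * G / 2"
    by (simp add: algebra_simps)
  moreover have "W * Vk - r * Vk = (r - 1) * r / 2 * Vk" "W * Vk1 = r * (r + 1) / 2 * Vk1"
    by (simp_all add: W_def field_simps)
  ultimately show ?thesis by linarith
qed
lemma arith_final:
  fixes n a C S :: real
  assumes n: "n \<ge> 1" and C: "C \<ge> 0" and a: "a \<ge> 8 * C / n"
    and Q: "a * (n * (n + 1) / 2) + S < n * C" and S: "S \<ge> 0"
  shows False
proof -
  have "a * n \<ge> 8 * C" using a n by (simp add: divide_le_eq)
  then have "a * n * ((n + 1) / 2) \<ge> 8 * C * ((n + 1) / 2)" using n by (intro mult_right_mono) auto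
  moreover have "n * C \<le> (4 * (n + 1)) * C" using C n by (intro mult_right_mono) auto
  then have "8 * C * ((n + 1) / 2) \<ge> n * C" by (simp add: algebra_simps)
  moreover have "a * (n * (n + 1) / 2) = a * n * ((n + 1) / 2)" by simp
  ultimately show False using Q S by linarith
qed

lemma arith_eta:
  fixes L n mf mg Lf Lg \<eta> :: real
  assumes L: "L > 0" and n: "n \<ge> 1" and mf: "mf > 0" and mg: "mg > 0"
    and eta: "\<eta> = 8 * L / n * max mf mg * max (Lf\<^sup>2 / mf\<^sup>2) (Lg\<^sup>2 / mg\<^sup>2)"
  shows "\<eta> * L / mg \<ge> 8 * (L\<^sup>2 * Lg\<^sup>2 / mg\<^sup>2) / n"
proof -
  have "\<eta> \<ge> 8 * L / n * mg * (Lg\<^sup>2 / mg\<^sup>2)"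
    unfolding eta using L n mg by (intro mult_mono) auto
  then have "\<eta> * L / mg \<ge> 8 * L / n * mg * (Lg\<^sup>2 / mg\<^sup>2) * L / mg"
    using L mg by (intro divide_right_mono mult_right_mono) auto
  also have "8 * L / n * mg * (Lg\<^sup>2 / mg\<^sup>2) * L / mg = 8 * (L\<^sup>2 * Lg\<^sup>2 / mg\<^sup>2) / n"
    using mg n by (simp add: field_simps power2_eq_square)
  finally show ?thesis .
qed
theorem mainTheorem4:
  fixes X :: "'a::euclidean_space set" and \<Delta> :: "'b::euclidean_space set"
    and f :: "'a \<Rightarrow> real" and g :: "'a \<Rightarrow> 'b \<Rightarrow> real"
    and fsub :: "'a \<Rightarrow> 'a" and gsub :: "'a \<Rightarrow> 'b \<Rightarrow> 'a"
    and \<omega> :: "'a \<Rightarrow> real" and d\<omega> :: "'a \<Rightarrow> 'a"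
    and L_f L_gX L_gD \<mu>_f \<mu>_g L \<eta> :: real and N :: nat
    and x :: "nat \<Rightarrow> 'a" and \<delta> :: "nat \<Rightarrow> 'b" and h :: "nat \<Rightarrow> 'a" and \<gamma> :: "nat \<Rightarrow> real"
  assumes X: "convex X" "compact X"
    and f_convex: "convex_on X f" and f_lip: "L_f-lipschitz_on X f"
    and Delta: "compact \<Delta>"
    and g_convex: "\<And>d. d \<in> \<Delta> \<Longrightarrow> convex_on X (\<lambda>y. g y d)"
    and g_lipX: "\<And>d. d \<in> \<Delta> \<Longrightarrow> L_gX-lipschitz_on X (\<lambda>y. g y d)"
    and g_lipD: "\<And>y. y \<in> X \<Longrightarrow> L_gD-lipschitz_on \<Delta> (\<lambda>d. g y d)"
    and opt: "\<exists>xs\<in>X. Gmax g \<Delta> xs \<le> 0 \<and> (\<forall>y\<in>X. Gmax g \<Delta> y \<le> 0 \<longrightarrow> f xs \<le> f y)"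
    and fsub: "\<And>y. y \<in> X \<Longrightarrow> is_subgrad_on X f y (fsub y) \<and> norm (fsub y) \<le> L_f"
    and gsub: "\<And>y d. y \<in> X \<Longrightarrow> d \<in> \<Delta> \<Longrightarrow>
                 is_subgrad_on X (\<lambda>z. g z d) y (gsub y d) \<and> norm (gsub y d) \<le> L_gX"
    and omega_diff: "\<And>y. y \<in> X \<Longrightarrow> (\<omega> has_derivative (\<lambda>v. inner (d\<omega> y) v)) (at y within X)"
    and omega_C1: "continuous_on X d\<omega>"
    and omega_sc: "strongly_convex_with X 1 \<omega>"
    and mu_pos: "\<mu>_f > 0" "\<mu>_g > 0"
    and f_sc: "\<And>y z. y \<in> X \<Longrightarrow> z \<in> X \<Longrightarrow>
                 f y \<ge> f z + inner (fsub z) (y - z) + \<mu>_f / 2 * (norm (y - z))\<^sup>2"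
    and g_sc: "\<And>d y z. d \<in> \<Delta> \<Longrightarrow> y \<in> X \<Longrightarrow> z \<in> X \<Longrightarrow>
                 g y d \<ge> g z d + inner (gsub z d) (y - z) + \<mu>_g / 2 * (norm (y - z))\<^sup>2"
    and L_pos: "L > 0"
    and V_bound: "\<And>y z. y \<in> X \<Longrightarrow> z \<in> X \<Longrightarrow> bregman \<omega> d\<omega> y z \<le> L / 2 * (norm (y - z))\<^sup>2"
    and N: "N \<ge> 1"
    and eta: "\<eta> = 8 * L / real N * max \<mu>_f \<mu>_g * max (L_f\<^sup>2 / \<mu>_f\<^sup>2) (L_gX\<^sup>2 / \<mu>_g\<^sup>2)"
    and x1: "x 1 \<in> X"
    and delta: "\<And>k. 1 \<le> k \<Longrightarrow> k \<le> N \<Longrightarrow> \<delta> k \<in> \<Delta>"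
    and h: "\<And>k. 1 \<le> k \<Longrightarrow> k \<le> N \<Longrightarrow>
              h k = (if g (x k) (\<delta> k) \<le> \<eta> then fsub (x k) else gsub (x k) (\<delta> k))"
    and gamma: "\<And>k. 1 \<le> k \<Longrightarrow> k \<le> N \<Longrightarrow>
              \<gamma> k = (if g (x k) (\<delta> k) \<le> \<eta> then 2 * L / (\<mu>_f * (real k + 1))
                                            else 2 * L / (\<mu>_g * (real k + 1)))"
    and step: "\<And>k. 1 \<le> k \<Longrightarrow> k \<le> N \<Longrightarrow> is_prox X \<omega> d\<omega> (x k) (\<gamma> k *\<^sub>R h k) (x (Suc k))"
  shows "{k \<in> {1..N}. g (x k) (\<delta> k) \<le> \<eta>} \<noteq> {}"
proof (rule ccontr)
  assume "\<not> ?thesis"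
  then have nb: "\<And>k. 1 \<le> k \<Longrightarrow> k \<le> N \<Longrightarrow> g (x k) (\<delta> k) > \<eta>" by fastforce
  obtain u where u: "u \<in> X" "Gmax g \<Delta> u \<le> 0" using opt by blast
  have xX: "1 \<le> k \<Longrightarrow> k \<le> Suc N \<Longrightarrow> x k \<in> X" for k
  proof (induction k)
    case 0 then show ?case by simp
  next
    case (Suc k)
    show ?case
    proof (cases "k = 0")
      case True then show ?thesis using x1 by simp
    next
      case False
      then have "1 \<le> k" "k \<le> N" using Suc.prems by auto
      then show ?thesis using step[of k] unfolding is_prox_def by auto
    qed
  qed
  have gu: "g u d \<le> 0" if d: "d \<in> \<Delta>" for d
  proof -
    have "continuous_on \<Delta> (\<lambda>d. g u d)"
      by (rule lipschitz_on_continuous_on[OF g_lipD[OF u(1)]])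
    then have "bdd_above ((\<lambda>d. g u d) ` \<Delta>)"
      using Delta by (intro bounded_imp_bdd_above compact_imp_bounded compact_continuous_image)
    then have "g u d \<le> Gmax g \<Delta> u" unfolding Gmax_def using d by (rule cSUP_upper2) simp
    then show ?thesis using u(2) by simp
  qed
  define V where "V k = bregman \<omega> d\<omega> (x k) u" for k
  define S where "S k = (real k - 1) * real k / 2 * V k" for k
  define C where "C = L\<^sup>2 * L_gX\<^sup>2 / \<mu>_g\<^sup>2"
  define a where "a = \<eta> * L / \<mu>_g"
  have stepk: "a * real k + S (Suc k) - S k < C" if k: "1 \<le> k" "k \<le> N" for k
  proof -
    have gt: "\<eta> < g (x k) (\<delta> k)" using nb k by simp
    have xk: "x k \<in> X" and xk1: "x (Suc k) \<in> X" using xX k by auto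
    have dk: "\<delta> k \<in> \<Delta>" using delta k by simp
    define hk where "hk = gsub (x k) (\<delta> k)"
    define gm where "gm = 2 * L / (\<mu>_g * (real k + 1))"
    have hkdef: "h k = hk" using h[OF k] gt by (simp add: hk_def)
    have gmdef: "\<gamma> k = gm" using gamma[OF k] gt by (simp add: gm_def)
    have gmpos: "gm > 0" using L_pos mu_pos by (simp add: gm_def)
    have pr: "is_prox X \<omega> d\<omega> (x k) (gm *\<^sub>R hk) (x (Suc k))" using step[OF k] hkdef gmdef by simp
    have P: "inner (gm *\<^sub>R hk) (x k - u) \<le> V k - V (Suc k) + (norm (gm *\<^sub>R hk))\<^sup>2 / 2"
      unfolding V_def
      by (rule prox_step[OF omega_diff[OF xk] omega_diff[OF xk1] X(1) u(1) xk omega_sc pr])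
    have hn: "norm hk \<le> L_gX" using gsub[OF xk dk] by (simp add: hk_def)
    have "(norm (gm *\<^sub>R hk))\<^sup>2 = gm\<^sup>2 * (norm hk)\<^sup>2" using gmpos by (simp add: power_mult_distrib)
    also have "\<dots> \<le> gm\<^sup>2 * L_gX\<^sup>2" using hn by (intro mult_left_mono power_mono) auto
    finally have nb2: "(norm (gm *\<^sub>R hk))\<^sup>2 \<le> gm\<^sup>2 * L_gX\<^sup>2" .
    have G: "g u (\<delta> k) \<ge> g (x k) (\<delta> k) + inner hk (u - x k) + \<mu>_g / 2 * (norm (u - x k))\<^sup>2"
      using g_sc[OF dk u(1) xk] by (simp add: hk_def)
    have Vb: "V k \<le> L / 2 * (norm (x k - u))\<^sup>2" using V_bound[OF xk u(1)] by (simp add: V_def)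
    have "\<mu>_g / L * V k \<le> \<mu>_g / L * (L / 2 * (norm (x k - u))\<^sup>2)"
      using Vb mu_pos L_pos by (intro mult_left_mono) auto
    also have "\<dots> = \<mu>_g / 2 * (norm (u - x k))\<^sup>2" using L_pos by (simp add: norm_minus_commute)
    finally have Vb2: "\<mu>_g / L * V k \<le> \<mu>_g / 2 * (norm (u - x k))\<^sup>2" .
    have "inner hk (x k - u) = - inner hk (u - x k)" by (simp add: inner_diff_right)
    then have I: "\<eta> + \<mu>_g / L * V k < inner hk (x k - u)" using G gu[OF dk] gt Vb2 by linarith
    have "gm * (\<eta> + \<mu>_g / L * V k) < gm * inner hk (x k - u)"
      using I gmpos by (rule mult_strict_left_mono)
    then have E: "gm * \<eta> + gm * (\<mu>_g / L) * V k < V k - V (Suc k) + gm\<^sup>2 * L_gX\<^sup>2 / 2"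
      using P nb2 by (simp add: algebra_simps)
    have "\<eta> * L / \<mu>_g * real k + real k * (real k + 1) / 2 * V (Suc k) - (real k - 1) * real k / 2 * V k
          < L\<^sup>2 * L_gX\<^sup>2 / \<mu>_g\<^sup>2"
      by (rule arith_step[OF _ L_pos mu_pos(2) _ gm_def E]) (use k in auto)
    then show ?thesis by (simp add: a_def C_def S_def algebra_simps)
  qed
  have Q: "n \<le> N \<Longrightarrow> a * (real n * (real n + 1) / 2) + S (Suc n) - real n * C \<le> 0
              \<and> (1 \<le> n \<longrightarrow> a * (real n * (real n + 1) / 2) + S (Suc n) - real n * C < 0)" for n
  proof (induction n)
    case 0 then show ?case by (simp add: S_def)
  next
    case (Suc n)
    have s: "a * real (Suc n) + S (Suc (Suc n)) - S (Suc n) < C" using stepk[of "Suc n"] Suc.prems by simp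
    have e: "a * (real (Suc n) * (real (Suc n) + 1) / 2) = a * (real n * (real n + 1) / 2) + a * real (Suc n)"
      by (simp add: field_simps)
    have c: "real (Suc n) * C = real n * C + C" by (simp add: algebra_simps)
    have "a * (real n * (real n + 1) / 2) + S (Suc n) - real n * C \<le> 0" using Suc by simp
    then have "a * (real (Suc n) * (real (Suc n) + 1) / 2) + S (Suc (Suc n)) - real (Suc n) * C < 0"
      using s e c by linarith
    then show ?case by simp
  qed
  have QN: "a * (real N * (real N + 1) / 2) + S (Suc N) < real N * C" using Q[of N] N by simp
  have xN: "x (Suc N) \<in> X" using xX[of "Suc N"] by simp
  have "(norm (u - x (Suc N)))\<^sup>2 / 2 \<le> V (Suc N)" unfolding V_def
    by (rule breg_lb[of \<omega> d\<omega> "x (Suc N)" X u, OF omega_diff[OF xN] X(1) xN u(1) omega_sc])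
  then have "V (Suc N) \<ge> 0" by (smt (verit) zero_le_power2 divide_nonneg_pos)
  then have SN: "S (Suc N) \<ge> 0" by (simp add: S_def)
  have Cn: "C \<ge> 0" by (simp add: C_def)
  have aeta: "a \<ge> 8 * C / real N"
    unfolding a_def C_def by (rule arith_eta[OF L_pos _ mu_pos eta]) (use N in simp)
  show False by (rule arith_final[OF _ Cn aeta QN SN]) (use N in simp)
qed

end
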